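(* Let $d\ge2$ and $k\in\{1,\dots,d-1\}$. For every $\tau,\varepsilon>0$ there exists $\eta>0$ such that for every $\tau$-admissible $\mathbf r=(r_1,r_2,r_3)\in(0,\infty)^3$, the closed unit ball $\mathbb B_{d-k}\subset\mathbb R^{d-k}$ admits a measurable partition $\mathbb B_{d-k}=\mathcal G\cup\mathcal B$ with $|\mathcal B|<\varepsilon$ such that for every $x_3'\in\mathcal G$, $$\lambda_{x_3'}\Big\{(x_1',x_2')\in\mathbb B_{d-k}^2:\ \textstyle\sum_{j=1}^3r_jx_j'=0\ \text{and}\ (r_j\phi(x_j'))_{1\le j\le3}\ \text{is }\eta\text{-admissible}\Big\}\ge\eta.$$
   Context: $\phi(t)=(1-|t|^2)^{1/2}$ for $|t|\le1$. A triple of positive reals $(s_j)$ is $\tau$-admissible if $s_i+s_j\ge s_k+\tau\max(s_1,s_2,s_3)$ for every permutation $(i,j,k)$ of $(1,2,3)$. For fixed $x_3'$, $\lambda_{x_3'}$ is the measure on $\{(x_1',x_2')\in(\mathbb R^{d-k})^2: r_1x_1'+r_2x_2'+r_3x_3'=0\}$ given by Lebesgue measure of the projection $(x_1',x_2')\mapsto x_1'$. *)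

theory Defs
  imports "HOL-Analysis.Analysis"
begin

definition phi :: "'a::euclidean_space \<Rightarrow> real" where
  "phi t = sqrt (1 - (norm t)\<^sup>2)"

definition admissible :: "real \<Rightarrow> real \<Rightarrow> real \<Rightarrow> real \<Rightarrow> bool" where
  "admissible \<tau> s1 s2 s3 \<longleftrightarrow> s1 > 0 \<and> s2 > 0 \<and> s3 > 0 \<and>
     (let M = max s1 (max s2 s3) in
        s1 + s2 \<ge> s3 + \<tau> * M \<and> s1 + s3 \<ge> s2 + \<tau> * M \<and> s2 + s3 \<ge> s1 + \<tau> * M)"

text \<open>lambda_{x3}(S) for the set S of pairs (x1,x2) in the ball squared with
  r1 x1 + r2 x2 + r3 x3 = 0 and (r_j phi(x_j)) eta-admissible: Lebesgue measure of the
  projection to x1 (x2 is determined by x1).\<close>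
definition lam_good :: "real \<Rightarrow> real \<Rightarrow> real \<Rightarrow> real \<Rightarrow> 'a::euclidean_space \<Rightarrow> ennreal" where
  "lam_good \<eta> r1 r2 r3 x3 =
     emeasure lebesgue
       {x1 \<in> cball 0 1. \<exists>x2 \<in> cball 0 1. r1 *\<^sub>R x1 + r2 *\<^sub>R x2 + r3 *\<^sub>R x3 = 0 \<and>
          admissible \<eta> (r1 * phi x1) (r2 * phi x2) (r3 * phi x3)}"

end

theory Submission
  imports Defs
begin


lemma heron_poly:
  fixes s1 s2 s3 :: real
  shows "(s1+s2+s3)*(s1+s2-s3)*(s1-s2+s3)*(-s1+s2+s3) =
    2*(s1^2* s2^2+s2^2* s3^2+s3^2* s1^2) - s1^4 - s2^4 - s3^4"
  by (simp add: algebra_simps power2_eq_square power4_eq_xxxx)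

lemma key_identity:
  fixes r1 r2 r3 u :: real
  assumes "r3 \<noteq> 0"
  defines "S1 \<equiv> r1^2 - (r2^2-r1^2-r3^2)^2*u/(4*r3^2)"
      and "S2 \<equiv> r2^2 - (r1^2-r2^2-r3^2)^2*u/(4*r3^2)"
      and "S3 \<equiv> r3^2 - r3^2*u"
  shows "2*(S1*S2+S2*S3+S3*S1) - S1^2 - S2^2 - S3^2 =
     (1-u)*(2*(r1^2*r2^2+r2^2*r3^2+r3^2*r1^2) - r1^4-r2^4-r3^4)"
  using assms unfolding S1_def S2_def S3_def
  by (simp add: field_simps power2_eq_square power4_eq_xxxx)

lemma tri_margin:
  fixes s1 s2 s3 M K :: real
  assumes "0 \<le> s1" "0 \<le> s2" "0 \<le> s3" "s1 \<le> M" "s2 \<le> M" "s3 \<le> M" "0 < K"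
    and P: "K \<le> (s1+s2+s3)*(s1+s2-s3)*(s1-s2+s3)*(-s1+s2+s3)"
  shows "s1+s2-s3 \<ge> K/(12*M^3)"
proof -
  have M: "M > 0"
  proof (rule ccontr)
    assume "\<not> M > 0"
    hence "s1 = 0" "s2 = 0" "s3 = 0" using assms by linarith+
    thus False using P \<open>0 < K\<close> by simp
  qed
  have f1: "s1+s2-s3 > 0"
  proof (rule ccontr)
    assume "\<not> ?thesis"
    hence "s1+s2-s3 \<le> 0" by simp
    moreover have "s1-s2+s3 \<ge> 0" "-s1+s2+s3 \<ge> 0" using \<open>s1+s2-s3 \<le> 0\<close> assms by linarith+
    moreover have "s1+s2+s3 \<ge> 0" using assms by linarith
    ultimately have "(s1+s2+s3)*(s1+s2-s3)*(s1-s2+s3)*(-s1+s2+s3) \<le> 0"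
      by (metis mult_nonneg_nonpos mult_nonpos_nonneg)
    thus False using P \<open>0<K\<close> by linarith
  qed
  have f2: "s1-s2+s3 > 0"
  proof (rule ccontr)
    assume "\<not> ?thesis"
    hence "s1-s2+s3 \<le> 0" by simp
    moreover have "s1+s2-s3 \<ge> 0" "-s1+s2+s3 \<ge> 0" using \<open>s1-s2+s3 \<le> 0\<close> assms by linarith+
    moreover have "s1+s2+s3 \<ge> 0" using assms by linarith
    ultimately have "(s1+s2+s3)*(s1+s2-s3)*(s1-s2+s3)*(-s1+s2+s3) \<le> 0"
      by (metis mult_nonneg_nonpos mult_nonpos_nonneg mult_nonneg_nonneg)
    thus False using P \<open>0<K\<close> by linarith
  qed
  have f3: "-s1+s2+s3 > 0"
  proof (rule ccontr)
    assume "\<not> ?thesis"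
    hence "-s1+s2+s3 \<le> 0" by simp
    moreover have "s1+s2-s3 \<ge> 0" "s1-s2+s3 \<ge> 0" using \<open>-s1+s2+s3 \<le> 0\<close> assms by linarith+
    moreover have "s1+s2+s3 \<ge> 0" using assms by linarith
    ultimately have "(s1+s2+s3)*(s1+s2-s3)*(s1-s2+s3)*(-s1+s2+s3) \<le> 0"
      by (metis mult_nonneg_nonpos mult_nonneg_nonneg)
    thus False using P \<open>0<K\<close> by linarith
  qed
  have "(s1+s2+s3)*(s1+s2-s3)*(s1-s2+s3)*(-s1+s2+s3) \<le> (3*M)*(s1+s2-s3)*(2*M)*(2*M)"
  proof -
    have "(s1+s2+s3)*(s1+s2-s3) \<le> (3*M)*(s1+s2-s3)"
      using f1 assms by (intro mult_right_mono) auto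
    moreover have "(s1-s2+s3)*(-s1+s2+s3) \<le> (2*M)*(2*M)"
      using f2 f3 assms by (intro mult_mono) auto
    ultimately have "((s1+s2+s3)*(s1+s2-s3))*((s1-s2+s3)*(-s1+s2+s3)) \<le> ((3*M)*(s1+s2-s3))*((2*M)*(2*M))"
      using f1 f2 f3 M assms by (intro mult_mono) auto
    thus ?thesis by (simp add: mult.assoc)
  qed
  hence "K \<le> (s1+s2-s3) * (12*M^3)" using P by (simp add: algebra_simps power3_eq_cube)
  thus ?thesis using M by (simp add: divide_simps mult.commute)
qed



lemma adm_basic:
  assumes "admissible \<tau> r1 r2 r3" "0 < \<tau>"
  defines "M \<equiv> max r1 (max r2 r3)"
  shows "r1 > 0" "r2 > 0" "r3 > 0" "r1 \<ge> \<tau>*M" "r2 \<ge> \<tau>*M" "r3 \<ge> \<tau>*M" "\<tau> \<le> 1"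
    "r1+r2-r3 \<ge> \<tau>*M" "r1-r2+r3 \<ge> \<tau>*M" "-r1+r2+r3 \<ge> \<tau>*M" "M > 0"
    "r1 \<le> M" "r2 \<le> M" "r3 \<le> M"
proof -
  have A: "r1 > 0" "r2 > 0" "r3 > 0" "r1 + r2 \<ge> r3 + \<tau> * M" "r1 + r3 \<ge> r2 + \<tau> * M"
     "r2 + r3 \<ge> r1 + \<tau> * M"
    using assms(1) unfolding admissible_def M_def Let_def by auto
  show "r1 > 0" "r2 > 0" "r3 > 0" using A by auto
  show "r1+r2-r3 \<ge> \<tau>*M" "r1-r2+r3 \<ge> \<tau>*M" "-r1+r2+r3 \<ge> \<tau>*M" using A by auto
  show "r1 \<le> M" "r2 \<le> M" "r3 \<le> M" unfolding M_def by auto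
  show "M > 0" using A unfolding M_def by auto
  show "r1 \<ge> \<tau>*M" "r2 \<ge> \<tau>*M" "r3 \<ge> \<tau>*M" using A by linarith+
  have "M = r1 \<or> M = r2 \<or> M = r3" unfolding M_def by linarith
  moreover have "r1 \<ge> \<tau>*M" "r2 \<ge> \<tau>*M" "r3 \<ge> \<tau>*M" using A by linarith+
  ultimately have "M \<ge> \<tau>*M" by auto
  thus "\<tau> \<le> 1" using \<open>M > 0\<close> by (simp add: mult_le_cancel_right1)
qed

lemma coef_bound:
  fixes r1 r2 r3 :: real
  assumes "r1 > 0" "r3 > 0" "r2 \<le> r1 + r3" "r1 \<le> r2 + r3" "r3 \<le> r1 + r2" "r2 \<ge> 0"
  shows "((r2^2-r1^2-r3^2)/(2*r1*r3))^2 \<le> 1"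
proof -
  have "r2^2 \<le> (r1+r3)^2" using assms by (intro power_mono) auto
  hence u: "r2^2-r1^2-r3^2 \<le> 2*r1*r3" by (simp add: power2_eq_square algebra_simps)
  have "(r1-r3)^2 \<le> r2^2"
  proof (cases "r1 \<ge> r3")
    case True thus ?thesis using assms by (intro power_mono) auto
  next
    case False
    hence "(r3-r1)^2 \<le> r2^2" using assms by (intro power_mono) auto
    thus ?thesis by (simp add: power2_commute)
  qed
  hence l: "-(2*r1*r3) \<le> r2^2-r1^2-r3^2" by (simp add: power2_eq_square algebra_simps)
  have p: "2*r1*r3 > 0" using assms by auto
  have "\<bar>(r2^2-r1^2-r3^2)/(2*r1*r3)\<bar> \<le> 1"
    using u l p by (simp add: abs_le_iff divide_le_eq_1 le_divide_eq)
  thus ?thesis by (simp add: abs_square_le_1)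
qed




lemma core:
  fixes r1 r2 r3 \<tau> u \<rho> :: real
  assumes adm: "admissible \<tau> r1 r2 r3" and tau: "0 < \<tau>" and u: "0 \<le> u" "u \<le> \<rho>^2"
    and rho: "0 < \<rho>" "\<rho> < 1"
  defines "M \<equiv> max r1 (max r2 r3)"
    and "\<kappa> \<equiv> (1-\<rho>^2)*\<tau>^4/12"
  assumes a_def: "a = (r2^2-r1^2-r3^2)/(2*r1*r3)" and b_def: "b = (r1^2-r2^2-r3^2)/(2*r2*r3)"
    and s1_def: "s1 = r1* sqrt(1-a^2*u)" and s2_def: "s2 = r2* sqrt(1-b^2*u)" and s3_def: "s3 = r3* sqrt(1-u)"
  shows "a^2 \<le> 1" "b^2 \<le> 1" "s1+s2-s3 \<ge> \<kappa>*M" "s1-s2+s3 \<ge> \<kappa>*M" "-s1+s2+s3 \<ge> \<kappa>*M"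
proof -
  note B = adm_basic[OF adm tau, folded M_def]
  have tM: "0 \<le> \<tau>*M" using B tau by simp
  show a1: "a^2 \<le> 1" unfolding a_def by (intro coef_bound) (use B tM in linarith)+
  show b1: "b^2 \<le> 1" unfolding b_def by (intro coef_bound) (use B tM in linarith)+
  have "\<rho>^2 < 1" using rho by (simp add: power_less_one_iff)
  hence u1: "u < 1" using u by linarith
  have au: "a^2*u \<le> 1" by (rule mult_le_one) (use a1 u u1 in auto)
  have bu: "b^2*u \<le> 1" by (rule mult_le_one) (use b1 u u1 in auto)
  have "s1^2 = r1^2*(1-a^2*u)" unfolding s1_def using au by (simp add: power_mult_distrib)
  also have "\<dots> = r1^2 - (r2^2-r1^2-r3^2)^2*u/(4*r3^2)" unfolding a_def using B
    by (simp add: power_divide power_mult_distrib field_simps)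
  finally have s1sq: "s1^2 = r1^2 - (r2^2-r1^2-r3^2)^2*u/(4*r3^2)" .
  have "s2^2 = r2^2*(1-b^2*u)" unfolding s2_def using bu by (simp add: power_mult_distrib)
  also have "\<dots> = r2^2 - (r1^2-r2^2-r3^2)^2*u/(4*r3^2)" unfolding b_def using B
    by (simp add: power_divide power_mult_distrib field_simps)
  finally have s2sq: "s2^2 = r2^2 - (r1^2-r2^2-r3^2)^2*u/(4*r3^2)" .
  have s3sq: "s3^2 = r3^2 - r3^2*u" unfolding s3_def using u1 by (simp add: power_mult_distrib algebra_simps)
  have nn: "0 \<le> s1" "0 \<le> s2" "0 \<le> s3" unfolding s1_def s2_def s3_def using B au bu u1 by auto
  have le: "s1 \<le> M" "s2 \<le> M" "s3 \<le> M"
  proof -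
    have "sqrt(1-a^2*u) \<le> 1" "sqrt(1-b^2*u) \<le> 1" "sqrt(1-u) \<le> 1" using u au bu by auto
    hence "r1 * sqrt(1-a^2*u) \<le> r1" "r2 * sqrt(1-b^2*u) \<le> r2" "r3 * sqrt(1-u) \<le> r3"
      using B by (intro mult_left_le; simp)+
    thus "s1 \<le> M" "s2 \<le> M" "s3 \<le> M" unfolding s1_def s2_def s3_def using B by linarith+
  qed
  have H: "(r1+r2+r3)*(r1+r2-r3)*(r1-r2+r3)*(-r1+r2+r3) \<ge> (\<tau>*M)^4"
  proof -
    have t0: "\<tau>*M \<ge> 0" using B tau by auto
    have "r1+r2+r3 \<ge> \<tau>*M" using B by linarith
    hence "(\<tau>*M)*(\<tau>*M)*(\<tau>*M)*(\<tau>*M) \<le> (r1+r2+r3)*(r1+r2-r3)*(r1-r2+r3)*(-r1+r2+r3)"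
      using B t0 by (intro mult_mono) (auto intro!: mult_nonneg_nonneg)
    thus ?thesis by (simp add: power4_eq_xxxx)
  qed
  have P: "(s1+s2+s3)*(s1+s2-s3)*(s1-s2+s3)*(-s1+s2+s3) =
     (1-u)*((r1+r2+r3)*(r1+r2-r3)*(r1-r2+r3)*(-r1+r2+r3))"
  proof -
    have e: "\<And>x::real. x^4 = (x^2)^2" by (simp add: power4_eq_xxxx power2_eq_square)
    have "(s1+s2+s3)*(s1+s2-s3)*(s1-s2+s3)*(-s1+s2+s3) = 2*(s1^2* s2^2+s2^2* s3^2+s3^2* s1^2) - (s1^2)^2 - (s2^2)^2 - (s3^2)^2"
      by (simp only: heron_poly e)
    also have "\<dots> = (1-u)*(2*(r1^2*r2^2+r2^2*r3^2+r3^2*r1^2) - r1^4-r2^4-r3^4)"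
      unfolding s1sq s2sq s3sq by (rule key_identity) (use B in simp)
    also have "\<dots> = (1-u)*((r1+r2+r3)*(r1+r2-r3)*(r1-r2+r3)*(-r1+r2+r3))"
      by (simp only: heron_poly)
    finally show ?thesis .
  qed
  define K where "K = (1-\<rho>^2)*(\<tau>*M)^4"
  have K0: "K > 0" unfolding K_def using B tau rho by (simp add: power_less_one_iff)
  have KP: "K \<le> (s1+s2+s3)*(s1+s2-s3)*(s1-s2+s3)*(-s1+s2+s3)"
    unfolding P K_def
    by (intro mult_mono H) (use u u1 in auto)
  have KM: "K/(12*M^3) = \<kappa>*M" unfolding K_def \<kappa>_def using B by (simp add: field_simps power_mult_distrib power4_eq_xxxx power3_eq_cube)
  show "s1+s2-s3 \<ge> \<kappa>*M" using tri_margin[OF nn le K0 KP] KM by simp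
  show "s1-s2+s3 \<ge> \<kappa>*M" using tri_margin[of s1 s3 s2 M K] nn le K0 KP KM by (simp add: algebra_simps)
  show "-s1+s2+s3 \<ge> \<kappa>*M" using tri_margin[of s2 s3 s1 M K] nn le K0 KP KM by (simp add: algebra_simps)
qed




lemma perturb_adm:
  fixes s1 s2 s3 t1 t2 t3 M \<kappa> \<eta> :: real
  assumes "s1+s2-s3 \<ge> \<kappa>*M" "s1-s2+s3 \<ge> \<kappa>*M" "-s1+s2+s3 \<ge> \<kappa>*M"
    and "\<bar>t1 - s1\<bar> \<le> \<kappa>*M/6" "\<bar>t2 - s2\<bar> \<le> \<kappa>*M/6" "\<bar>t3 - s3\<bar> \<le> \<kappa>*M/6"
    and "t1 \<le> M" "t2 \<le> M" "t3 \<le> M" "M > 0" "\<kappa> > 0" "0 < \<eta>" "\<eta> \<le> \<kappa>/2"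
  shows "admissible \<eta> t1 t2 t3"
proof -
  have kM: "\<kappa>*M > 0" using assms by simp
  have d: "-(t1-s1) \<le> \<kappa>*M/6" "-(t2-s2) \<le> \<kappa>*M/6" "-(t3-s3) \<le> \<kappa>*M/6"
    "(t1-s1) \<le> \<kappa>*M/6" "(t2-s2) \<le> \<kappa>*M/6" "(t3-s3) \<le> \<kappa>*M/6"
    using assms(4,5,6) abs_le_D1 abs_le_D2 by blast+
  have pos: "t1 > 0" "t2 > 0" "t3 > 0" using assms(1-3) d kM by linarith+
  define m where "m = max t1 (max t2 t3)"
  have "m \<le> M" unfolding m_def using assms by auto
  hence "\<eta>*m \<le> \<eta>*M" using assms by (intro mult_left_mono) auto
  also have "\<eta>*M \<le> (\<kappa>/2)*M" using assms by (intro mult_right_mono) auto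
  finally have em: "\<eta>*m \<le> \<kappa>*M/2" by simp
  have "t1 + t2 \<ge> t3 + \<eta>*m" "t1 + t3 \<ge> t2 + \<eta>*m" "t2 + t3 \<ge> t1 + \<eta>*m"
    using assms(1-3) d em by linarith+
  thus ?thesis using pos unfolding admissible_def Let_def m_def by auto
qed

lemma sqrt_diff_le:
  fixes A B :: real
  assumes "0 \<le> A" "0 \<le> B"
  shows "\<bar>sqrt A - sqrt B\<bar> \<le> sqrt \<bar>A - B\<bar>"
proof -
  have *: "sqrt X - sqrt Y \<le> sqrt (X - Y)" if "0 \<le> Y" "Y \<le> X" for X Y :: real
  proof -
    have "sqrt X = sqrt (Y + (X - Y))" by simp
    also have "\<dots> \<le> sqrt Y + sqrt (X - Y)" using that by (intro sqrt_add_le_add_sqrt) auto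
    finally show ?thesis by simp
  qed
  show ?thesis
  proof (cases "B \<le> A")
    case True
    thus ?thesis using *[of B A] assms by (simp add: abs_if)
  next
    case False
    thus ?thesis using *[of A B] assms by (simp add: abs_if abs_minus_commute)
  qed
qed

lemma phi_diff:
  fixes x y :: "'a::euclidean_space"
  assumes "norm x \<le> 1" "norm y \<le> 1"
  shows "\<bar>phi x - phi y\<bar> \<le> sqrt (2 * norm (x - y))"
proof -
  have "\<bar>phi x - phi y\<bar> \<le> sqrt \<bar>(1 - (norm x)^2) - (1 - (norm y)^2)\<bar>"
    unfolding phi_def using assms by (intro sqrt_diff_le) (auto simp: power_le_one)
  also have "(1 - (norm x)^2) - (1 - (norm y)^2) = (norm y - norm x) * (norm y + norm x)"
    by (simp add: power2_eq_square algebra_simps)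
  also have "\<bar>(norm y - norm x) * (norm y + norm x)\<bar> = \<bar>norm y - norm x\<bar> * (norm y + norm x)"
    by (simp add: abs_mult)
  also have "\<dots> \<le> norm (x - y) * 2"
    using assms by (intro mult_mono) (auto simp: norm_minus_commute intro: order_trans[OF _ norm_triangle_ineq3])
  finally show ?thesis by (simp add: mult.commute)
qed




lemma borel_lebesgue: "A \<in> sets borel \<Longrightarrow> A \<in> sets lebesgue"
  by simp

lemma emeasure_lebesgue_borel: "A \<in> sets borel \<Longrightarrow> emeasure lebesgue A = emeasure lborel A"
  by (simp add: emeasure_completion)

lemma phi_cont: "continuous_on UNIV (phi :: 'a::euclidean_space \<Rightarrow> real)"
  unfolding phi_def by (intro continuous_intros)

lemma phi_cont'[continuous_intros]:
  "continuous_on S f \<Longrightarrow> continuous_on S (\<lambda>x. phi (f x :: 'a::euclidean_space))"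
  by (rule continuous_on_compose2[OF phi_cont]) auto

lemma lam_set_meas:
  fixes x3 :: "'a::euclidean_space"
  assumes "r2 \<noteq> 0"
  shows "{x1 \<in> cball 0 1. \<exists>x2 \<in> cball 0 1. r1 *\<^sub>R x1 + r2 *\<^sub>R x2 + r3 *\<^sub>R x3 = 0 \<and>
          admissible \<eta> (r1 * phi x1) (r2 * phi x2) (r3 * phi x3)} \<in> sets lebesgue"
proof -
  define g where "g x1 = -(1/r2) *\<^sub>R (r1 *\<^sub>R x1 + r3 *\<^sub>R x3)" for x1
  have eq: "{x1 \<in> cball 0 1. \<exists>x2 \<in> cball 0 1. r1 *\<^sub>R x1 + r2 *\<^sub>R x2 + r3 *\<^sub>R x3 = 0 \<and>
          admissible \<eta> (r1 * phi x1) (r2 * phi x2) (r3 * phi x3)} =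
        {x1 \<in> space borel. norm x1 \<le> 1 \<and> norm (g x1) \<le> 1 \<and>
          admissible \<eta> (r1 * phi x1) (r2 * phi (g x1)) (r3 * phi x3)}"
  proof (intro set_eqI iffI)
    fix x1 assume "x1 \<in> {x1 \<in> cball 0 1. \<exists>x2 \<in> cball 0 1. r1 *\<^sub>R x1 + r2 *\<^sub>R x2 + r3 *\<^sub>R x3 = 0 \<and>
          admissible \<eta> (r1 * phi x1) (r2 * phi x2) (r3 * phi x3)}"
    then obtain x2 where x2: "norm x1 \<le> 1" "norm x2 \<le> 1" "r1 *\<^sub>R x1 + r2 *\<^sub>R x2 + r3 *\<^sub>R x3 = 0"
      "admissible \<eta> (r1 * phi x1) (r2 * phi x2) (r3 * phi x3)" by auto
    have "r2 *\<^sub>R x2 = -(r1 *\<^sub>R x1 + r3 *\<^sub>R x3)" using x2(3) by (simp add: algebra_simps eq_neg_iff_add_eq_0)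
    hence h: "r2 *\<^sub>R x2 = -(r1 *\<^sub>R x1 + r3 *\<^sub>R x3)" .
    have "x2 = (1/r2) *\<^sub>R (r2 *\<^sub>R x2)" using assms by simp
    also have "\<dots> = g x1" unfolding g_def h by (simp only: scaleR_minus_left scaleR_minus_right)
    finally have "x2 = g x1" .
    thus "x1 \<in> {x1 \<in> space borel. norm x1 \<le> 1 \<and> norm (g x1) \<le> 1 \<and>
          admissible \<eta> (r1 * phi x1) (r2 * phi (g x1)) (r3 * phi x3)}" using x2 by auto
  next
    fix x1 assume "x1 \<in> {x1 \<in> space borel. norm x1 \<le> 1 \<and> norm (g x1) \<le> 1 \<and>
          admissible \<eta> (r1 * phi x1) (r2 * phi (g x1)) (r3 * phi x3)}"
    moreover have "r1 *\<^sub>R x1 + r2 *\<^sub>R g x1 + r3 *\<^sub>R x3 = 0" unfolding g_def using assms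
      by (simp add: algebra_simps)
    ultimately show "x1 \<in> {x1 \<in> cball 0 1. \<exists>x2 \<in> cball 0 1. r1 *\<^sub>R x1 + r2 *\<^sub>R x2 + r3 *\<^sub>R x3 = 0 \<and>
          admissible \<eta> (r1 * phi x1) (r2 * phi x2) (r3 * phi x3)}" by auto
  qed
  have gc: "continuous_on UNIV g" unfolding g_def by (intro continuous_intros)
  define t1 where "t1 x = r1 * phi x" for x :: 'a
  define t2 where "t2 x = r2 * phi (g x)" for x
  have c1: "continuous_on UNIV t1" unfolding t1_def by (intro continuous_intros)
  have c2: "continuous_on UNIV t2" unfolding t2_def by (intro continuous_intros gc)
  have eq2: "{x1 \<in> space borel. norm x1 \<le> 1 \<and> norm (g x1) \<le> 1 \<and>
          admissible \<eta> (r1 * phi x1) (r2 * phi (g x1)) (r3 * phi x3)} =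
     {x. norm x \<le> 1 \<and> norm (g x) \<le> 1 \<and>
        r3 * phi x3 + \<eta> * max (t1 x) (max (t2 x) (r3 * phi x3)) \<le> t1 x + t2 x \<and>
        t2 x + \<eta> * max (t1 x) (max (t2 x) (r3 * phi x3)) \<le> t1 x + r3 * phi x3 \<and>
        t1 x + \<eta> * max (t1 x) (max (t2 x) (r3 * phi x3)) \<le> t2 x + r3 * phi x3} \<inter>
     {x. 0 < t1 x \<and> 0 < t2 x \<and> 0 < r3 * phi x3}"
    unfolding admissible_def Let_def t1_def t2_def by auto
  have "closed {x. norm x \<le> 1 \<and> norm (g x) \<le> 1 \<and>
        r3 * phi x3 + \<eta> * max (t1 x) (max (t2 x) (r3 * phi x3)) \<le> t1 x + t2 x \<and>
        t2 x + \<eta> * max (t1 x) (max (t2 x) (r3 * phi x3)) \<le> t1 x + r3 * phi x3 \<and>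
        t1 x + \<eta> * max (t1 x) (max (t2 x) (r3 * phi x3)) \<le> t2 x + r3 * phi x3}"
    by (intro closed_Collect_conj closed_Collect_le continuous_intros c1 c2 gc)
  moreover have "open {x. 0 < t1 x \<and> 0 < t2 x \<and> 0 < r3 * phi x3}"
    by (intro open_Collect_conj open_Collect_less continuous_intros c1 c2)
  ultimately have "{x1 \<in> space borel. norm x1 \<le> 1 \<and> norm (g x1) \<le> 1 \<and>
          admissible \<eta> (r1 * phi x1) (r2 * phi (g x1)) (r3 * phi x3)} \<in> sets borel"
    unfolding eq2 by (intro sets.Int borel_closed borel_open)
  thus ?thesis unfolding eq by simp
qed

lemma vol_small:
  assumes "\<epsilon> > 0"
  shows "\<exists>\<rho>. 0 < \<rho> \<and> \<rho> < 1 \<and> emeasure lebesgue (cball 0 1 - cball (0::'a::euclidean_space) \<rho>) < ennreal \<epsilon>"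
proof -
  define n where "n = DIM('a)"
  define V where "V = unit_ball_vol (real n)"
  have V0: "V > 0" unfolding V_def by (intro unit_ball_vol_pos) auto
  have n0: "n > 0" unfolding n_def by simp
  define t where "t = min (1/2) (\<epsilon>/(2*real n*V))"
  have t0: "t > 0" "t \<le> 1/2" unfolding t_def using assms V0 n0 by auto
  define \<rho> where "\<rho> = 1 - t"
  have r: "0 < \<rho>" "\<rho> < 1" unfolding \<rho>_def using t0 by auto
  have "1 + real n * (-t) \<le> (1 + (-t))^n" using t0 by (intro Bernoulli_inequality) auto
  hence bern: "1 - \<rho>^n \<le> real n * t" unfolding \<rho>_def by simp
  have "real n * t \<le> real n * (\<epsilon>/(2*real n*V))" unfolding t_def by (intro mult_left_mono) auto
  also have "\<dots> = \<epsilon>/(2*V)" using n0 by simp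
  finally have "V * (1 - \<rho>^n) \<le> V * (\<epsilon>/(2*V))" using bern V0 by (intro mult_left_mono) auto
  also have "\<dots> = \<epsilon>/2" using V0 by simp
  finally have small: "V * (1 - \<rho>^n) < \<epsilon>" using assms by simp
  have rn: "\<rho>^n \<le> 1" using r by (simp add: power_le_one)
  have "emeasure lebesgue (cball 0 1 - cball (0::'a) \<rho>) = emeasure lborel (cball 0 1 - cball (0::'a) \<rho>)"
    by (intro emeasure_lebesgue_borel) auto
  also have "\<dots> = emeasure lborel (cball (0::'a) 1) - emeasure lborel (cball (0::'a) \<rho>)"
    using r by (intro emeasure_Diff) (auto simp: emeasure_cball)
  also have "\<dots> = ennreal (V * 1^n) - ennreal (V * \<rho>^n)"
    using r unfolding V_def n_def by (simp add: emeasure_cball)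
  also have "\<dots> = ennreal (V * (1 - \<rho>^n))" using V0 r by (subst ennreal_minus) (auto simp: algebra_simps)
  also have "\<dots> < ennreal \<epsilon>" using small rn V0 by (intro ennreal_lessI) (auto simp: assms)
  finally show ?thesis using r by blast
qed




lemma phi_le1: "phi x \<le> 1" unfolding phi_def by simp

lemma pointwise:
  fixes x3 :: "'a::euclidean_space" and \<tau> \<rho> \<eta> :: real
  assumes adm: "admissible \<tau> r1 r2 r3" and tau: "0 < \<tau>" and rho: "0 < \<rho>" "\<rho> < 1"
    and x3: "norm x3 \<le> \<rho>" and eta: "0 < \<eta>" "\<eta> \<le> ((1-\<rho>^2)*\<tau>^4/12)/2"
  shows "\<exists>p. ball p (\<tau>*((1-\<rho>^2)*\<tau>^4/12)^2/72) \<subseteq>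
     {x1 \<in> cball 0 1. \<exists>x2 \<in> cball 0 1. r1 *\<^sub>R x1 + r2 *\<^sub>R x2 + r3 *\<^sub>R x3 = 0 \<and>
          admissible \<eta> (r1 * phi x1) (r2 * phi x2) (r3 * phi x3)}"
proof -
  define M where "M = max r1 (max r2 r3)"
  define \<kappa> where "\<kappa> = (1-\<rho>^2)*\<tau>^4/12"
  define \<delta> where "\<delta> = \<tau>*\<kappa>^2/72"
  note B = adm_basic[OF adm tau, folded M_def]
  define a where "a = (r2^2-r1^2-r3^2)/(2*r1*r3)"
  define b where "b = (r1^2-r2^2-r3^2)/(2*r2*r3)"
  define u where "u = (norm x3)^2"
  define s1 where "s1 = r1 * sqrt(1-a^2*u)"
  define s2 where "s2 = r2 * sqrt(1-b^2*u)"
  define s3 where "s3 = r3 * sqrt(1-u)"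
  have u: "0 \<le> u" "u \<le> \<rho>^2" unfolding u_def using x3 by (auto intro: power_mono)
  note C = core[OF adm tau u rho a_def b_def s1_def s2_def s3_def, folded M_def \<kappa>_def]
  have k0: "\<kappa> > 0" unfolding \<kappa>_def using rho tau by (simp add: power_less_one_iff)
  have r2: "\<rho>^2 \<le> 1" using rho by (simp add: power_le_one)
  have t4: "\<tau>^4 \<le> 1" using B tau by (simp add: power_le_one)
  have k1: "\<kappa> \<le> (1-\<rho>^2)/12"
  proof -
    have "(1-\<rho>^2)*\<tau>^4 \<le> (1-\<rho>^2)*1" using r2 t4 by (intro mult_left_mono) auto
    thus ?thesis unfolding \<kappa>_def by simp
  qed
  have "0 \<le> (1-\<rho>)*(1-\<rho>)" by simp
  hence "1-\<rho>^2 \<le> 2*(1-\<rho>)" by (simp add: power2_eq_square algebra_simps)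
  hence k2: "\<kappa> \<le> (1-\<rho>)/6" using k1 by simp
  have "\<kappa>^2 \<le> \<kappa>" using k0 k2 rho by (simp add: power2_eq_square mult_le_cancel_right1)
  moreover have "(1-\<rho>)/6 \<le> 72*(1-\<rho>)" using rho by simp
  ultimately have "\<kappa>^2 \<le> 72*(1-\<rho>)" using k2 by (meson order_trans)
  hence dt: "\<delta>/\<tau> \<le> 1-\<rho>" unfolding \<delta>_def using tau by simp
  have d0: "\<delta> > 0" unfolding \<delta>_def using tau k0 by simp
  have ddt: "\<delta> \<le> \<delta>/\<tau>" using B tau d0 by (simp add: le_divide_eq)
  have sq: "sqrt (2*(\<delta>/\<tau>)) = \<kappa>/6"
  proof -
    have "2*(\<delta>/\<tau>) = (\<kappa>/6)^2" unfolding \<delta>_def using tau by (simp add: power2_eq_square)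
    thus ?thesis using k0 by simp
  qed
  define p where "p = a *\<^sub>R x3"
  define q where "q = b *\<^sub>R x3"
  have abs_a: "\<bar>a\<bar> \<le> 1" "\<bar>b\<bar> \<le> 1" using C(1,2) by (simp_all add: abs_square_le_1)
  have np: "norm p \<le> \<rho>" unfolding p_def using abs_a x3 by (simp add: mult_le_one order_trans[OF mult_right_mono[of "\<bar>a\<bar>" 1 "norm x3"]])
  have nq: "norm q \<le> \<rho>" unfolding q_def using abs_a x3 by (simp add: order_trans[OF mult_right_mono[of "\<bar>b\<bar>" 1 "norm x3"]])
  have lin: "r1 *\<^sub>R p + r2 *\<^sub>R q + r3 *\<^sub>R x3 = 0"
  proof -
    have "r1 * a + r2 * b + r3 = 0" unfolding a_def b_def using B by (simp add: field_simps power2_eq_square)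
    hence "(r1 * a + r2 * b + r3) *\<^sub>R x3 = 0" by simp
    thus ?thesis unfolding p_def q_def by (simp add: algebra_simps)
  qed
  have sp: "s1 = r1 * phi p" unfolding s1_def phi_def p_def u_def by (simp add: power_mult_distrib)
  have sq2: "s2 = r2 * phi q" unfolding s2_def phi_def q_def u_def by (simp add: power_mult_distrib)
  have sx3: "s3 = r3 * phi x3" unfolding s3_def phi_def u_def by simp
  have rr: "r1/r2 \<le> 1/\<tau>"
  proof -
    have "\<tau>*r1 \<le> \<tau>*M" using B tau by (intro mult_left_mono) auto
    hence "\<tau>*r1 \<le> r2" using B by linarith
    thus ?thesis using B tau by (simp add: divide_simps mult.commute)
  qed
  show ?thesis unfolding \<delta>_def[symmetric] \<kappa>_def[symmetric]
  proof (intro exI[of _ p] subsetI)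
    fix x1 assume x1: "x1 \<in> ball p \<delta>"
    define x2 where "x2 = q - (r1/r2) *\<^sub>R (x1 - p)"
    have d1: "norm (x1 - p) < \<delta>" using x1 by (simp add: dist_norm norm_minus_commute)
    have d2: "norm (x2 - q) \<le> \<delta>/\<tau>"
    proof -
      have "norm (x2 - q) = (r1/r2) * norm (x1 - p)" unfolding x2_def using B by simp
      also have "\<dots> \<le> (1/\<tau>) * \<delta>" using rr d1 B tau by (intro mult_mono) auto
      finally show ?thesis by simp
    qed
    have n1: "norm x1 \<le> 1"
      using norm_triangle_ineq[of p "x1 - p"] np d1 ddt dt by simp
    have n2: "norm x2 \<le> 1"
      using norm_triangle_ineq[of q "x2 - q"] nq d2 dt by simp
    have lin2: "r1 *\<^sub>R x1 + r2 *\<^sub>R x2 + r3 *\<^sub>R x3 = 0"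
    proof -
      have "r1 *\<^sub>R x1 + r2 *\<^sub>R x2 + r3 *\<^sub>R x3 = r1 *\<^sub>R p + r2 *\<^sub>R q + r3 *\<^sub>R x3"
        unfolding x2_def using B by (simp add: algebra_simps)
      thus ?thesis using lin by simp
    qed
    have e1: "\<bar>r1 * phi x1 - s1\<bar> \<le> \<kappa>*M/6"
    proof -
      have "\<bar>phi x1 - phi p\<bar> \<le> sqrt (2 * norm (x1 - p))" using n1 np rho by (intro phi_diff) auto
      also have "\<dots> \<le> sqrt (2*(\<delta>/\<tau>))" using d1 ddt by simp
      finally have "\<bar>phi x1 - phi p\<bar> \<le> \<kappa>/6" using sq by simp
      hence "r1 * \<bar>phi x1 - phi p\<bar> \<le> M * (\<kappa>/6)" using B k0 by (intro mult_mono) auto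
      thus ?thesis unfolding sp using B by (simp add: abs_mult right_diff_distrib[symmetric] mult.commute)
    qed
    have e2: "\<bar>r2 * phi x2 - s2\<bar> \<le> \<kappa>*M/6"
    proof -
      have "\<bar>phi x2 - phi q\<bar> \<le> sqrt (2 * norm (x2 - q))" using n2 nq rho by (intro phi_diff) auto
      also have "\<dots> \<le> sqrt (2*(\<delta>/\<tau>))" using d2 by simp
      finally have "\<bar>phi x2 - phi q\<bar> \<le> \<kappa>/6" using sq by simp
      hence "r2 * \<bar>phi x2 - phi q\<bar> \<le> M * (\<kappa>/6)" using B k0 by (intro mult_mono) auto
      thus ?thesis unfolding sq2 using B by (simp add: abs_mult right_diff_distrib[symmetric] mult.commute)
    qed
    have e3: "\<bar>r3 * phi x3 - s3\<bar> \<le> \<kappa>*M/6" using sx3 k0 B by simp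
    have le: "r1 * phi x1 \<le> M" "r2 * phi x2 \<le> M" "r3 * phi x3 \<le> M"
      using B phi_le1 by (meson mult_left_le order_trans less_imp_le)+
    have "admissible \<eta> (r1 * phi x1) (r2 * phi x2) (r3 * phi x3)"
      by (rule perturb_adm[OF C(3,4,5) e1 e2 e3 le]) (use B k0 eta in \<open>auto simp: \<kappa>_def\<close>)
    thus "x1 \<in> {x1 \<in> cball 0 1. \<exists>x2 \<in> cball 0 1. r1 *\<^sub>R x1 + r2 *\<^sub>R x2 + r3 *\<^sub>R x3 = 0 \<and>
          admissible \<eta> (r1 * phi x1) (r2 * phi x2) (r3 * phi x3)}"
      using n1 n2 lin2 by auto
  qed
qed


theorem lemma3p2:
  fixes \<tau> \<epsilon> :: real
  assumes "\<tau> > 0" and "\<epsilon> > 0"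
  shows "\<exists>\<eta>>0. \<forall>r1 r2 r3. admissible \<tau> r1 r2 r3 \<longrightarrow>
           (\<exists>G B. G \<in> sets lebesgue \<and> B \<in> sets lebesgue \<and>
              G \<union> B = cball (0::'a::euclidean_space) 1 \<and> G \<inter> B = {} \<and>
              emeasure lebesgue B < ennreal \<epsilon> \<and>
              (\<forall>x3\<in>G. lam_good \<eta> r1 r2 r3 x3 \<ge> ennreal \<eta>))"
proof -
  obtain \<rho> where rho: "0 < \<rho>" "\<rho> < 1"
    and Bm: "emeasure lebesgue (cball 0 1 - cball (0::'a) \<rho>) < ennreal \<epsilon>"
    using vol_small[OF assms(2)] by blast
  define \<kappa> where "\<kappa> = (1-\<rho>^2)*\<tau>^4/12"
  define \<delta> where "\<delta> = \<tau>*\<kappa>^2/72"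
  define V where "V = unit_ball_vol (real DIM('a)) * \<delta>^DIM('a)"
  define \<eta> where "\<eta> = min (\<kappa>/2) V"
  have k0: "\<kappa> > 0" unfolding \<kappa>_def using rho assms by (simp add: power_less_one_iff)
  have d0: "\<delta> > 0" unfolding \<delta>_def using k0 assms by simp
  have V0: "V > 0" unfolding V_def using d0 by (intro mult_pos_pos unit_ball_vol_pos) auto
  have e0: "\<eta> > 0" unfolding \<eta>_def using k0 V0 by simp
  show ?thesis
  proof (intro exI[of _ \<eta>] conjI allI impI e0)
    fix r1 r2 r3 assume adm: "admissible \<tau> r1 r2 r3"
    have r2: "r2 \<noteq> 0" using adm unfolding admissible_def by auto
    show "\<exists>G B. G \<in> sets lebesgue \<and> B \<in> sets lebesgue \<and>
              G \<union> B = cball (0::'a::euclidean_space) 1 \<and> G \<inter> B = {} \<and>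
              emeasure lebesgue B < ennreal \<epsilon> \<and>
              (\<forall>x3\<in>G. lam_good \<eta> r1 r2 r3 x3 \<ge> ennreal \<eta>)"
    proof (rule exI[of _ "cball (0::'a) \<rho>"], rule exI[of _ "cball 0 1 - cball (0::'a) \<rho>"], intro conjI ballI)
      show "cball (0::'a) \<rho> \<in> sets lebesgue" by simp
      show "cball 0 1 - cball (0::'a) \<rho> \<in> sets lebesgue" by simp
      show "cball 0 \<rho> \<union> (cball 0 1 - cball 0 \<rho>) = cball (0::'a) 1" using rho by auto
      show "cball 0 \<rho> \<inter> (cball 0 1 - cball 0 \<rho>) = ({}::'a set)" by auto
      show "emeasure lebesgue (cball 0 1 - cball (0::'a) \<rho>) < ennreal \<epsilon>" by (rule Bm)
      fix x3 :: 'a assume x3: "x3 \<in> cball 0 \<rho>"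
      have "\<eta> \<le> \<kappa>/2" unfolding \<eta>_def by simp
      then obtain p :: 'a where p: "ball p \<delta> \<subseteq>
          {x1 \<in> cball 0 1. \<exists>x2 \<in> cball 0 1. r1 *\<^sub>R x1 + r2 *\<^sub>R x2 + r3 *\<^sub>R x3 = 0 \<and>
          admissible \<eta> (r1 * phi x1) (r2 * phi x2) (r3 * phi x3)}"
        using pointwise[OF adm assms(1) rho, of x3 \<eta>] x3 e0 unfolding \<kappa>_def \<delta>_def by auto
      have "ennreal \<eta> \<le> ennreal V" unfolding \<eta>_def by (intro ennreal_leI) simp
      also have "ennreal V = emeasure lborel (ball p \<delta>)"
        unfolding V_def using emeasure_ball[of \<delta> p] d0 by simp
      also have "\<dots> = emeasure lebesgue (ball p \<delta>)"
        by (rule emeasure_lebesgue_borel[symmetric]) simp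
      also have "\<dots> \<le> lam_good \<eta> r1 r2 r3 x3"
        unfolding lam_good_def by (rule emeasure_mono[OF p lam_set_meas[OF r2]])
      finally show "lam_good \<eta> r1 r2 r3 x3 \<ge> ennreal \<eta>" .
    qed
  qed
qed

end
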